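(* Consider the repeated service game described in the context, with $t>0$, $\tau\in(0,t)$, $c>0$, $p>c$, $d\in(0,1)$, $w\in(0,1)$, and a strictly decreasing continuous utility $\Gamma:[0,1]\to(0,\infty)$ with $\Gamma(0)>p$. If the cooperation conditions hold, then $$d\le d_s(w;\tau,p):=1-\frac{c\left(1-(1-w)\frac{\tau}{t}\right)}{wp}\qquad\text{and}\qquad d\le d_c(w;\tau,p):=\Gamma^{-1}\!\left(\frac{p}{1-(1-w)\frac{\tau}{t}}\right).$$
   Context: A service provider (SP) and a client interact in rounds of duration $t>0$. The parameters are: trial time $\tau$, SP cost per unit time $c$, price per unit time $p$, channel outage probability $d$, continuation probability (cooperation willingness) $w$, and a client utility function $\Gamma$. When both players use the cooperative strategy COOP, the long-term payoffs are $$\Pi_s^{\mathrm C}=\frac{(1-d)(p-c)t-dc\tau}{1-(1-d)w},\qquad \Pi_c^{\mathrm C}=\frac{(1-d)(\Gamma(d)-p)t+d\Gamma(d)\tau}{1-(1-d)w}.$$ For an integer $j\ge 2$, the long-term payoff of a player using the defect-and-recover-after-$j$-rounds strategy JDEF$_j$ against COOP is: - for the SP, $$\Pi_s^{(j)}=\frac{(1-d)\big(pt-c\tau-w^{j-1}c(t-\tau)\big)-dc\tau}{1-(1-d)w^{j}};$$ - for the client, $$\Pi_c^{(j)}=\frac{(1-d)\big(\Gamma(d)\tau+w^{j-1}(\Gamma(d)(t-\tau)-pt)\big)+d\Gamma(d)\tau}{1-(1-d)w^{j}}.$$ The cooperation conditions hold when both of the following hold: - $\Pi_s^{\mathrm C}\ge\Pi_s^{(j)}$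 for all integers $j\ge2$; - $\Pi_c^{\mathrm C}\ge \Pi_c^{(j)}$ for all integers $j\ge 2$. For $0<y\le \Gamma(0)$, we write $\Gamma^{-1}(y):=\sup\{x\in[0,1]:\Gamma(x)\ge y\}$. This coincides with the inverse of $\Gamma$ whenever $y$ is in the range of $\Gamma$. *)

theory Defs
  imports Complex_Main
begin

text \<open>Long-term payoffs. Parameters: t (round duration), tau (trial time), c (SP cost),
  p (price), d (outage probability), w (continuation probability), G = Gamma(d).\<close>

definition PiS_coop :: "real \<Rightarrow> real \<Rightarrow> real \<Rightarrow> real \<Rightarrow> real \<Rightarrow> real \<Rightarrow> real" where
  "PiS_coop t tau c p d w = ((1 - d) * (p - c) * t - d * c * tau) / (1 - (1 - d) * w)"

definition PiC_coop :: "real \<Rightarrow> real \<Rightarrow> real \<Rightarrow> real \<Rightarrow> real \<Rightarrow> real \<Rightarrow> real" where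
  "PiC_coop t tau G p d w = ((1 - d) * (G - p) * t + d * G * tau) / (1 - (1 - d) * w)"

definition PiS_jdef :: "nat \<Rightarrow> real \<Rightarrow> real \<Rightarrow> real \<Rightarrow> real \<Rightarrow> real \<Rightarrow> real \<Rightarrow> real" where
  "PiS_jdef j t tau c p d w =
     ((1 - d) * (p * t - c * tau - w ^ (j - 1) * c * (t - tau)) - d * c * tau) / (1 - (1 - d) * w ^ j)"

definition PiC_jdef :: "nat \<Rightarrow> real \<Rightarrow> real \<Rightarrow> real \<Rightarrow> real \<Rightarrow> real \<Rightarrow> real \<Rightarrow> real" where
  "PiC_jdef j t tau G p d w =
     ((1 - d) * (G * tau + w ^ (j - 1) * (G * (t - tau) - p * t)) + d * G * tau) / (1 - (1 - d) * w ^ j)"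

definition cooperation_conditions ::
  "real \<Rightarrow> real \<Rightarrow> real \<Rightarrow> real \<Rightarrow> real \<Rightarrow> real \<Rightarrow> (real \<Rightarrow> real) \<Rightarrow> bool" where
  "cooperation_conditions t tau c p d w Gamma \<longleftrightarrow>
     (\<forall>j::nat. j \<ge> 2 \<longrightarrow> PiS_coop t tau c p d w \<ge> PiS_jdef j t tau c p d w) \<and>
     (\<forall>j::nat. j \<ge> 2 \<longrightarrow> PiC_coop t tau (Gamma d) p d w \<ge> PiC_jdef j t tau (Gamma d) p d w)"

text \<open>Generalised inverse: Gamma^{-1}(y) = sup {x in [0,1]. Gamma x >= y} (meaningful for 0 < y <= Gamma 0).\<close>
definition gen_inv :: "(real \<Rightarrow> real) \<Rightarrow> real \<Rightarrow> real" where
  "gen_inv Gamma y = Sup {x \<in> {0..1}. Gamma x \<ge> y}"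

definition d_s :: "real \<Rightarrow> real \<Rightarrow> real \<Rightarrow> real \<Rightarrow> real \<Rightarrow> real" where
  "d_s t c w tau p = 1 - c * (1 - (1 - w) * (tau / t)) / (w * p)"

definition d_c :: "real \<Rightarrow> (real \<Rightarrow> real) \<Rightarrow> real \<Rightarrow> real \<Rightarrow> real \<Rightarrow> real" where
  "d_c t Gamma w tau p = gen_inv Gamma (p / (1 - (1 - w) * (tau / t)))"

end

theory Submission
  imports Defs
begin

theorem corollary1:
  fixes t tau c p d w :: real and Gamma :: "real \<Rightarrow> real"
  assumes "t > 0" and "0 < tau" and "tau < t" and "c > 0" and "p > c"
    and "0 < d" and "d < 1" and "0 < w" and "w < 1"
    and "\<forall>x\<in>{0..1}. \<forall>y\<in>{0..1}. x < y \<longrightarrow> Gamma y < Gamma x"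
    and "continuous_on {0..1} Gamma"
    and "\<forall>x\<in>{0..1}. Gamma x > 0"
    and "Gamma 0 > p"
    and "cooperation_conditions t tau c p d w Gamma"
  shows "d \<le> d_s t c w tau p \<and>
         p / (1 - (1 - w) * (tau / t)) \<le> Gamma 0 \<and>
         d \<le> d_c t Gamma w tau p"
proof -
  note a = assms
  have h1: "(\<lambda>n. w ^ (n+1)) \<longlonglongrightarrow> 0"
    using LIMSEQ_power_zero[of w] a(8,9) LIMSEQ_Suc by auto
  have h2: "(\<lambda>n. w ^ (n+2)) \<longlonglongrightarrow> 0"
    using LIMSEQ_power_zero[of w] a(8,9) LIMSEQ_Suc[OF h1] by auto
  define G where "G = Gamma d"
  have Dw: "1 - (1-d)*w > 0" 
  proof -
    have "(1-d)*w < 1*1" by (rule mult_strict_mono) (use a(6-9) in auto)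
    then show ?thesis by simp
  qed
  have eqS: "\<And>n. PiS_jdef (n+2) t tau c p d w =
     ((1 - d) * (p * t - c * tau - w ^ (n+1) * c * (t - tau)) - d * c * tau) / (1 - (1 - d) * w ^ (n+2))"
    unfolding PiS_jdef_def by simp
  have eqC: "\<And>n. PiC_jdef (n+2) t tau G p d w =
     ((1 - d) * (G * tau + w ^ (n+1) * (G * (t - tau) - p * t)) + d * G * tau) / (1 - (1 - d) * w ^ (n+2))"
    unfolding PiC_jdef_def by simp
  have LS: "(\<lambda>n. PiS_jdef (n+2) t tau c p d w) \<longlonglongrightarrow>
     ((1 - d) * (p * t - c * tau - 0 * c * (t - tau)) - d * c * tau) / (1 - (1 - d) * 0)"
    unfolding eqS by (intro tendsto_intros h1 h2) simp
  have LC: "(\<lambda>n. PiC_jdef (n+2) t tau G p d w) \<longlonglongrightarrow>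
     ((1 - d) * (G * tau + 0 * (G * (t - tau) - p * t)) + d * G * tau) / (1 - (1 - d) * 0)"
    unfolding eqC by (intro tendsto_intros h1 h2) simp
  have cS: "\<And>n. PiS_jdef (n+2) t tau c p d w \<le> PiS_coop t tau c p d w"
    using a(14) unfolding cooperation_conditions_def by auto
  have cC: "\<And>n. PiC_jdef (n+2) t tau G p d w \<le> PiC_coop t tau G p d w"
    using a(14) unfolding cooperation_conditions_def G_def by auto
  have IS: "(1 - d) * (p * t - c * tau) - d * c * tau \<le> PiS_coop t tau c p d w"
    using LIMSEQ_le_const2[OF LS] cS by auto
  have IC: "G * tau \<le> PiC_coop t tau G p d w"
    using LIMSEQ_le_const2[OF LC] cC by (auto simp: algebra_simps)
  have IS2: "((1 - d) * (p * t - c * tau) - d * c * tau) * (1 - (1-d)*w) \<le> (1 - d) * (p - c) * t - d * c * tau"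
    using IS Dw unfolding PiS_coop_def by (simp add: pos_le_divide_eq)
  have IC2: "G * tau * (1 - (1-d)*w) \<le> (1 - d) * (G - p) * t + d * G * tau"
    using IC Dw unfolding PiC_coop_def by (simp add: pos_le_divide_eq)
  have S3: "c * (t - (1-w)*tau) \<le> (1-d)*w*p*t"
  proof -
    have e: "((1 - d) * (p - c) * t - d * c * tau) - ((1 - d) * (p * t - c * tau) - d * c * tau) * (1 - (1-d)*w)
       = (1-d) * ((1-d)*w*p*t - c * (t - (1-w)*tau))" by (simp add: algebra_simps)
    have "0 \<le> (1-d) * ((1-d)*w*p*t - c * (t - (1-w)*tau))" using IS2 e by linarith
    then show ?thesis using a(7) by (simp add: zero_le_mult_iff)
  qed
  have C3: "p * t \<le> G * (t - (1-w)*tau)"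
  proof -
    have e: "(1 - d) * (G - p) * t + d * G * tau - G * tau * (1 - (1-d)*w)
       = (1-d) * (G * (t - (1-w)*tau) - p * t)" by (simp add: algebra_simps)
    have "0 \<le> (1-d) * (G * (t - (1-w)*tau) - p * t)" using IC2 e by linarith
    then show ?thesis using a(7) by (simp add: zero_le_mult_iff)
  qed
  have pos: "t - (1-w)*tau > 0" using a(2,3,8,9)
    by (smt (verit) mult_left_le_one_le)
  have r: "1 - (1 - w) * (tau / t) = (t - (1-w)*tau) / t" using a(1) by (simp add: field_simps)
  have P1: "d \<le> d_s t c w tau p"
  proof -
    have "c * (1 - (1 - w) * (tau / t)) = c * (t - (1-w)*tau) / t" using r by simp
    also have "\<dots> \<le> (1-d)*w*p" using S3 a(1) by (simp add: pos_divide_le_eq)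
    finally have "c * (1 - (1 - w) * (tau / t)) / (w*p) \<le> 1 - d"
      using a(8,4,5) by (subst pos_divide_le_eq) (auto simp: mult.commute mult.left_commute)
    then show ?thesis unfolding d_s_def by linarith
  qed
  have Y: "p / (1 - (1 - w) * (tau / t)) \<le> G"
    unfolding r using C3 pos a(1) by (simp add: field_simps)
  have dd: "d \<in> {0..1}" "0 \<in> {0..1::real}" using a(6,7) by auto
  have G0: "G < Gamma 0" using a(10) dd a(6) unfolding G_def by blast
  have P3: "d \<le> d_c t Gamma w tau p"
    unfolding d_c_def gen_inv_def
  proof (rule cSup_upper)
    show "d \<in> {x \<in> {0..1}. p / (1 - (1 - w) * (tau / t)) \<le> Gamma x}" using Y dd(1) unfolding G_def by auto
    show "bdd_above {x \<in> {0..1::real}. p / (1 - (1 - w) * (tau / t)) \<le> Gamma x}"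
      by (rule bdd_aboveI[where M=1]) auto
  qed
  show ?thesis using P1 P3 Y G0 by auto
qed

end
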